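(* Let $n\geq 2$, $\lambda=\frac{n-1}{2}$, and let $$\mathcal K(t)=\sum_{l=1}^\infty\frac{-1}{l(n+l-1)}\cdot\frac{\lambda+l}{\lambda}\,C_l^\lambda(t).$$ For $r\in[0,1)$ and $\vartheta\in[0,\pi]$ let $$p_r(\cos\vartheta)=\frac{1}{\Sigma_n}\cdot\frac{1-r^2}{(1-2r\cos\vartheta+r^2)^{(n+1)/2}}=\frac{1}{\Sigma_n}\sum_{l=0}^\infty r^l\,\frac{\lambda+l}{\lambda}\,C_l^\lambda(\cos\vartheta),$$ where $\Sigma_n=\frac{2\pi^{(n+1)/2}}{\Gamma((n+1)/2)}$. Then, for $\vartheta\in(0,\pi]$, $$\mathcal K(\cos\vartheta)=-\lim_{\epsilon\to0}\int_0^{1-\epsilon}R^{n-2}\int_0^R\frac{\Sigma_n\, p_r(\cos\vartheta)-1}{r}\,dr\,dR.$$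
   Context: $C_l^\lambda$ denotes the Gegenbauer polynomial of degree $l$ and order $\lambda$. $\Sigma_n$ is the surface area of the unit sphere $\mathcal S^n\subseteq\mathbb R^{n+1}$, and $p_r$ is the Poisson kernel on $\mathcal S^n$.
   Formalization: $\mathcal K(t)$ is the limit as s tends to 1 from below of the series with its l-th term multiplied by s to the power l, not the ordinary sum, and this limit is also asserted to exist at $\cos\vartheta$. Apart from conventions, each condition added here is assumed in the paper as well or is needed for the statement above to hold. *)

theory Defs
  imports "HOL-Analysis.Analysis"
begin

definition gegenbauer :: "nat \<Rightarrow> real \<Rightarrow> real \<Rightarrow> real" where
  "gegenbauer l lam t =
     (\<Sum>k = 0..l div 2. (-1) ^ k * pochhammer lam (l - k)
         / (fact k * fact (l - 2 * k)) * (2 * t) ^ (l - 2 * k))"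

definition sphere_area :: "nat \<Rightarrow> real" where
  "sphere_area n = 2 * pi powr ((real n + 1) / 2) / Gamma ((real n + 1) / 2)"

definition poisson_kernel :: "nat \<Rightarrow> real \<Rightarrow> real \<Rightarrow> real" where
  "poisson_kernel n r t =
     (1 / sphere_area n) * (1 - r\<^sup>2) / (1 - 2 * r * t + r\<^sup>2) powr ((real n + 1) / 2)"

definition K_term :: "nat \<Rightarrow> nat \<Rightarrow> real \<Rightarrow> real" where
  "K_term n l t = (let lam = (real n - 1) / 2 in
      - 1 / (real l * (real n + real l - 1)) * ((lam + real l) / lam) * gegenbauer l lam t)"

text \<open>The series sum_{l>=1} K_term, taken in the Abel sense (the series does not
  converge in the ordinary sense for n >= 5).\<close>
definition K_kernel :: "nat \<Rightarrow> real \<Rightarrow> real" where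
  "K_kernel n t = Lim (at_left 1) (\<lambda>s. \<Sum>l. s ^ (Suc l) * K_term n (Suc l) t)"

end

theory Submission
  imports Defs "HOL-Complex_Analysis.Complex_Analysis"
begin


lemma fps_X_minus_pow_nth:
  fixes c :: "'a::comm_ring_1"
  shows "fps_nth ((fps_X - fps_const c) ^ i) j = (if j \<le> i then of_nat (i choose j) * (- c) ^ (i - j) else 0)"
proof -
  have "(fps_X - fps_const c) ^ i = (fps_X + fps_const (-c)) ^ i" by simp
  also have "\<dots> = (\<Sum>k\<le>i. of_nat (i choose k) * fps_X ^ k * fps_const (-c) ^ (i - k))"
    by (rule binomial_ring)
  finally have "fps_nth ((fps_X - fps_const c) ^ i) j = (\<Sum>k\<le>i. fps_nth (of_nat (i choose k) * fps_X ^ k * fps_const (-c) ^ (i - k)) j)"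
    by (simp add: fps_sum_nth)
  also have "\<dots> = (\<Sum>k\<le>i. if k = j then of_nat (i choose k) * (- c) ^ (i - k) else 0)"
    apply (intro sum.cong refl)
  proof -
    fix k
    have "of_nat (i choose k) * fps_X ^ k * fps_const (-c) ^ (i - k) = fps_const (of_nat (i choose k) * (-c) ^ (i - k)) * (fps_X ^ k :: 'a fps)"
      by (simp add: fps_const_power fps_of_nat[symmetric] fps_const_mult[symmetric] mult_ac del: fps_const_mult)
    then show "fps_nth (of_nat (i choose k) * fps_X ^ k * fps_const (-c) ^ (i - k)) j = (if k = j then of_nat (i choose k) * (- c) ^ (i - k) else 0)"
      by (simp add: fps_X_power_nth)
  qed
  finally show ?thesis by simp
qed

lemma gegen_term_eq:
  fixes lam t :: real and l k :: nat
  assumes "2 * k \<le> l"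
  shows "(- complex_of_real lam gchoose (l - k)) * (of_nat ((l - k) choose k) * (- of_real (2 * t)) ^ ((l - k) - k))
     = of_real ((-1) ^ k * pochhammer lam (l - k) / (fact k * fact (l - 2 * k)) * (2 * t) ^ (l - 2 * k))"
proof -
  have kk: "k \<le> l - k" using assms by simp
  have e1: "(l - k) - k = l - 2 * k" by simp
  have g: "(- complex_of_real lam gchoose (l - k)) = (-1) ^ (l - k) * of_real (pochhammer lam (l - k)) / fact (l - k)"
    by (simp add: gbinomial_pochhammer pochhammer_of_real)
  have b: "(of_nat ((l - k) choose k) :: complex) = fact (l - k) / (fact k * fact (l - 2 * k))"
    using binomial_fact[OF kk] e1 by simp
  have p: "(- complex_of_real (2 * t)) ^ (l - 2 * k) = (-1) ^ (l - 2 * k) * of_real ((2 * t) ^ (l - 2 * k))"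
    by (simp add: power_minus')
  have s: "((-1)::complex) ^ (l - k) * (-1) ^ (l - 2 * k) = (-1) ^ k"
  proof -
    have "(l - k) + (l - 2 * k) = k + 2 * (l - 2 * k)" using assms by simp
    then have "((-1)::complex) ^ (l - k) * (-1) ^ (l - 2 * k) = (-1) ^ k * ((-1) ^ 2) ^ (l - 2 * k)"
      by (metis power_add power_mult)
    then show ?thesis by simp
  qed
  have nz: "(fact (l - k) :: complex) \<noteq> 0" "(fact k :: complex) \<noteq> 0" "(fact (l - 2*k) :: complex) \<noteq> 0" by auto
  have "(- complex_of_real lam gchoose (l - k)) * (of_nat ((l - k) choose k) * (- of_real (2 * t)) ^ ((l - k) - k))
     = ((-1) ^ (l - k) * (-1) ^ (l - 2 * k)) * of_real (pochhammer lam (l - k)) / (fact k * fact (l - 2 * k)) * of_real ((2 * t) ^ (l - 2 * k))"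
    unfolding e1 g b p using nz by (simp add: field_simps)
  also have "\<dots> = of_real ((-1) ^ k * pochhammer lam (l - k) / (fact k * fact (l - 2 * k)) * (2 * t) ^ (l - 2 * k))"
    unfolding s by simp
  finally show ?thesis .
qed

lemma gegen_fps:
  fixes lam t :: real
  shows "fps_nth (fps_binomial (- complex_of_real lam) oo (fps_X^2 - fps_const (of_real (2*t)) * fps_X)) l
    = of_real (gegenbauer l lam t)"
proof -
  define c where "c = complex_of_real (2*t)"
  define G where "G i = (- complex_of_real lam gchoose i)" for i
  have pw: "(fps_X^2 - fps_const c * fps_X)^i = fps_X^i * (fps_X - fps_const c)^i" for i
  proof -
    have "fps_X^2 - fps_const c * fps_X = fps_X * (fps_X - fps_const c)"
      by (simp add: power2_eq_square algebra_simps)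
    then show ?thesis by (simp only: power_mult_distrib)
  qed
  have "fps_nth (fps_binomial (- complex_of_real lam) oo (fps_X^2 - fps_const c * fps_X)) l
      = (\<Sum>i=0..l. G i * (if l - i \<le> i then of_nat (i choose (l - i)) * (- c) ^ (i - (l - i)) else 0))"
    unfolding fps_compose_nth pw G_def
    by (intro sum.cong refl) (auto simp: fps_X_power_mult_nth fps_X_minus_pow_nth)
  also have "\<dots> = (\<Sum>k=0..l. G (l - k) * (if k \<le> l - k then of_nat ((l - k) choose k) * (- c) ^ ((l - k) - k) else 0))"
    by (subst sum.atLeastAtMost_rev) (intro sum.cong refl, auto simp: Suc_diff_le)
  also have "\<dots> = (\<Sum>k=0..l div 2. G (l - k) * (if k \<le> l - k then of_nat ((l - k) choose k) * (- c) ^ ((l - k) - k) else 0))"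
    apply (rule sum.mono_neutral_right)
      apply simp
     apply auto[1]
    apply (intro ballI)
    subgoal for k by (subgoal_tac "\<not> k \<le> l - k") auto
    done
  also have "\<dots> = (\<Sum>k=0..l div 2. of_real ((-1) ^ k * pochhammer lam (l - k) / (fact k * fact (l - 2 * k)) * (2 * t) ^ (l - 2 * k)))"
  proof (intro sum.cong refl)
    fix k assume "k \<in> {0..l div 2}"
    then have k: "2 * k \<le> l" by auto
    then have "k \<le> l - k" by auto
    then show "G (l - k) * (if k \<le> l - k then of_nat ((l - k) choose k) * (- c) ^ ((l - k) - k) else 0)
       = of_real ((-1) ^ k * pochhammer lam (l - k) / (fact k * fact (l - 2 * k)) * (2 * t) ^ (l - 2 * k))"
      using gegen_term_eq[OF k, of lam t] unfolding G_def c_def by simp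
  qed
  also have "\<dots> = of_real (gegenbauer l lam t)"
    unfolding gegenbauer_def by simp
  finally show ?thesis unfolding c_def .
qed


lemma prod_Re_pos_not_nonpos:
  fixes u v :: complex
  assumes "Re u > 0" "Re v > 0"
  shows "u * v \<notin> \<real>\<^sub>\<le>\<^sub>0"
proof
  assume "u * v \<in> \<real>\<^sub>\<le>\<^sub>0"
  then have i: "Re u * Im v + Im u * Re v = 0" and r: "Re u * Re v - Im u * Im v \<le> 0"
    by (auto simp: complex_nonpos_Reals_iff)
  have "Re u * (Re u * Re v - Im u * Im v) = (Re u)^2 * Re v + (Im u)^2 * Re v"
    using i by (simp add: power2_eq_square algebra_simps) (metis mult.assoc mult.left_commute ring_class.ring_distribs(1) add.commute i mult_zero_right)
  also have "\<dots> > 0" using assms by (simp add: add_pos_nonneg)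
  finally have "Re u * (Re u * Re v - Im u * Im v) > 0" .
  with assms(1) r show False by (simp add: mult_pos_neg zero_less_mult_iff)
qed

lemma quad_not_nonpos:
  fixes z :: complex and \<theta> :: real
  assumes "norm z < 1"
  shows "1 + (z^2 - of_real (2 * cos \<theta>) * z) \<notin> \<real>\<^sub>\<le>\<^sub>0"
proof -
  define u where "u = 1 - z * cis \<theta>"
  define v where "v = 1 - z * cis (-\<theta>)"
  have "cis \<theta> + cis (-\<theta>) = of_real (2 * cos \<theta>)"
    by (simp add: complex_eq_iff)
  moreover have "cis \<theta> * cis (-\<theta>) = 1" by (simp add: cis_mult)
  ultimately have uv: "u * v = 1 + (z^2 - of_real (2 * cos \<theta>) * z)"
    unfolding u_def v_def by (simp add: algebra_simps power2_eq_square) (metis (no_types, lifting) add_diff_cancel_left' distrib_left mult.commute mult.left_commute mult_1)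
  have "Re (z * cis \<theta>) \<le> norm (z * cis \<theta>)" by (rule complex_Re_le_cmod)
  then have "Re u > 0" unfolding u_def using assms by (simp add: norm_mult)
  have "Re (z * cis (-\<theta>)) \<le> norm (z * cis (-\<theta>))" by (rule complex_Re_le_cmod)
  then have "Re v > 0" unfolding v_def using assms by (simp add: norm_mult)
  show ?thesis using prod_Re_pos_not_nonpos[OF \<open>Re u > 0\<close> \<open>Re v > 0\<close>] uv by simp
qed

lemma quad_pos:
  fixes r t :: real
  assumes "\<bar>r\<bar> < 1" "\<bar>t\<bar> \<le> 1"
  shows "1 - 2 * r * t + r^2 > 0"
proof -
  have "1 - 2 * r * t + r^2 = (r - t)^2 + (1 - t^2)" by (simp add: power2_eq_square algebra_simps)
  moreover have "1 - t^2 \<ge> 0" using assms by (simp add: abs_square_le_1)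
  moreover have "(r - t)^2 + (1 - t^2) \<noteq> 0"
  proof
    assume h: "(r - t)^2 + (1 - t^2) = 0"
    with \<open>1 - t^2 \<ge> 0\<close> have "(r - t)^2 = 0" "t^2 = 1" by (smt (verit) zero_le_power2)+
    then have "r = t" "\<bar>t\<bar> = 1" by (auto simp: abs_square_eq_1)
    with assms show False by simp
  qed
  ultimately show ?thesis by (smt (verit) zero_le_power2)
qed

lemma gen_fun:
  fixes \<theta> lam r :: real
  assumes "\<bar>r\<bar> < 1"
  shows "(\<lambda>l. gegenbauer l lam (cos \<theta>) * r^l) sums ((1 - 2 * r * cos \<theta> + r^2) powr (-lam))"
proof -
  define t where "t = cos \<theta>"
  define Gc where "Gc = (\<lambda>z::complex. (1 + (z^2 - of_real (2 * t) * z)) powr (- of_real lam))"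
  define F where "F = fps_binomial (- complex_of_real lam) oo (fps_X^2 - fps_const (of_real (2*t)) * fps_X)"
  have e1: "(\<lambda>x::complex. (1 + x) powr (- of_real lam)) has_fps_expansion fps_binomial (- of_real lam)"
    by (rule has_fps_expansion_binomial_complex)
  have e2: "(\<lambda>z::complex. z^2 - of_real (2 * t) * z) has_fps_expansion (fps_X^2 - fps_const (of_real (2*t)) * fps_X)"
    by (intro fps_expansion_intros)
  have "((\<lambda>x::complex. (1 + x) powr (- of_real lam)) \<circ> (\<lambda>z::complex. z^2 - of_real (2 * t) * z)) has_fps_expansion F"
    unfolding F_def by (rule has_fps_expansion_compose[OF e1 e2]) simp
  then have exp: "Gc has_fps_expansion F" unfolding Gc_def o_def .
  have hol: "Gc holomorphic_on eball 0 1"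
    unfolding Gc_def t_def
    by (intro holomorphic_intros) (use quad_not_nonpos[of _ \<theta>] in \<open>auto simp: dist_norm\<close>)
  have A: "(\<lambda>n. fps_nth F n * (complex_of_real r) ^ n) sums Gc (of_real r)"
    by (rule has_fps_expansion_imp_sums_complex[OF exp hol]) (use assms in simp)
  have B: "fps_nth F n * (complex_of_real r) ^ n = of_real (gegenbauer n lam t * r^n)" for n
    unfolding F_def gegen_fps by simp
  have C: "Gc (of_real r) = of_real ((1 - 2 * r * t + r^2) powr (-lam))"
  proof -
    have "1 + ((complex_of_real r)^2 - of_real (2 * t) * of_real r) = of_real (1 - 2 * r * t + r^2)"
      by simp
    moreover have "1 - 2 * r * t + r^2 > 0" using quad_pos[OF assms, of t] by (simp add: t_def)
    ultimately show ?thesis unfolding Gc_def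
      by (metis less_imp_le of_real_minus powr_of_real)
  qed
  have "(\<lambda>n. complex_of_real (gegenbauer n lam t * r^n)) sums complex_of_real ((1 - 2 * r * t + r^2) powr (-lam))"
    using A unfolding B C .
  then show ?thesis unfolding t_def sums_of_real_iff .
qed



lemma powser_abs_summable:
  fixes a :: "nat \<Rightarrow> real"
  assumes rad: "\<And>r. \<bar>r\<bar> < 1 \<Longrightarrow> summable (\<lambda>l. a l * r^l)" and x: "\<bar>x\<bar> < 1"
  shows "summable (\<lambda>l. \<bar>a l * x^l\<bar>)"
proof -
  define K where "K = (1 + \<bar>x\<bar>) / 2"
  have K: "\<bar>K\<bar> < 1" "\<bar>x\<bar> < \<bar>K\<bar>" using x by (auto simp: K_def)
  show ?thesis using powser_insidea[OF rad[OF K(1)], of x] K(2) by simp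
qed

lemma powser_antideriv:
  fixes a :: "nat \<Rightarrow> real"
  assumes rad: "\<And>r. \<bar>r\<bar> < 1 \<Longrightarrow> summable (\<lambda>l. a l * r^l)" and x: "\<bar>x\<bar> < 1"
  shows "summable (\<lambda>l. a l / (l+1) * x^(l+1))"
    and "((\<lambda>x. \<Sum>l. a l / (l+1) * x^(l+1)) has_real_derivative (\<Sum>l. a l * x^l)) (at x)"
proof -
  define b where "b l = (if l = 0 then 0 else a (l - 1) / l)" for l
  have sm: "summable (\<lambda>l. a l / (l+1) * z^(l+1))" if z: "\<bar>z\<bar> < 1" for z
  proof (rule summable_comparison_test')
    show "summable (\<lambda>l. \<bar>z\<bar> * \<bar>a l * z^l\<bar>)"
      by (intro summable_mult powser_abs_summable[OF rad z])
    show "norm (a l / (l+1) * z^(l+1)) \<le> \<bar>z\<bar> * \<bar>a l * z^l\<bar>" for l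
    proof -
      have "norm (a l / (l+1) * z^(l+1)) = \<bar>a l\<bar> / (l+1) * (\<bar>z\<bar> * \<bar>z\<bar>^l)"
        by (simp add: abs_mult power_abs)
      also have "\<dots> \<le> \<bar>a l\<bar> * (\<bar>z\<bar> * \<bar>z\<bar>^l)"
        by (intro mult_right_mono) (auto simp: divide_le_eq intro!: mult_le_cancel_left1[THEN iffD2])
      finally show ?thesis by (simp add: abs_mult power_abs mult_ac)
    qed
  qed
  show "summable (\<lambda>l. a l / (l+1) * x^(l+1))" by (rule sm[OF x])
  have bsum: "summable (\<lambda>l. b l * z^l)" and beq: "(\<Sum>l. b l * z^l) = (\<Sum>l. a l / (l+1) * z^(l+1))"
    if z: "\<bar>z\<bar> < 1" for z
  proof -
    have e: "(\<lambda>l. b (Suc l) * z^(Suc l)) = (\<lambda>l. a l / (l+1) * z^(l+1))"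
      by (auto simp: b_def add.commute)
    show "summable (\<lambda>l. b l * z^l)"
      using sm[OF z] unfolding e[symmetric] by (rule summable_Suc_iff[THEN iffD1])
    from suminf_split_head[OF this] show "(\<Sum>l. b l * z^l) = (\<Sum>l. a l / (l+1) * z^(l+1))"
      unfolding e by (simp add: b_def)
  qed
  have d: "diffs b = a" by (auto simp: diffs_def b_def fun_eq_iff)
  have "((\<lambda>z. \<Sum>l. b l * z^l) has_real_derivative (\<Sum>l. diffs b l * x^l)) (at x)"
    by (rule termdiffs_strong'[of 1]) (use bsum x in auto)
  then have "((\<lambda>z. \<Sum>l. b l * z^l) has_real_derivative (\<Sum>l. a l * x^l)) (at x)"
    unfolding d .
  then show "((\<lambda>x. \<Sum>l. a l / (l+1) * x^(l+1)) has_real_derivative (\<Sum>l. a l * x^l)) (at x)"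
    by (rule has_field_derivative_transform_within_open[of _ _ _ "{-1<..<1}"])
       (use x beq in \<open>auto simp: abs_less_iff\<close>)
qed

lemma sphere_area_pos: "sphere_area n > 0"
  unfolding sphere_area_def by (intro divide_pos_pos mult_pos_pos Gamma_real_pos) auto

lemma poisson_series:
  fixes n :: nat and \<theta> r lam :: real
  assumes lam_def: "lam = (real n - 1) / 2"
  assumes n: "n \<ge> 2" and r: "\<bar>r\<bar> < 1"
  shows "(\<lambda>l. ((lam + l) / lam) * gegenbauer l lam (cos \<theta>) * r^l) sums (sphere_area n * poisson_kernel n r (cos \<theta>))"
proof -
  define t where "t = cos \<theta>"
  define C where "C l = gegenbauer l lam t" for l
  define Q where "Q z = 1 - 2 * z * t + z^2" for z
  have lam: "lam > 0" using n by (simp add: lam_def)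
  have t: "\<bar>t\<bar> \<le> 1" by (simp add: t_def)
  have Qpos: "Q z > 0" if "\<bar>z\<bar> < 1" for z using quad_pos[OF that t] by (simp add: Q_def)
  have gs: "(\<lambda>l. C l * z^l) sums (Q z powr (-lam))" if "\<bar>z\<bar> < 1" for z
    using gen_fun[OF that, of lam \<theta>] by (simp add: C_def Q_def t_def)
  define D where "D = (-lam) * Q r powr (-lam - 1) * (2 * r - 2 * t)"
  have d1: "((\<lambda>z. \<Sum>l. C l * z^l) has_real_derivative (\<Sum>l. diffs C l * r^l)) (at r)"
    by (rule termdiffs_strong'[of 1]) (use gs r in \<open>auto simp: sums_iff\<close>)
  have d1': "((\<lambda>z. Q z powr (-lam)) has_real_derivative (\<Sum>l. diffs C l * r^l)) (at r)"
    by (rule has_field_derivative_transform_within_open[OF d1, of "{-1<..<1}"])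
       (use r gs in \<open>auto simp: abs_less_iff sums_iff\<close>)
  have d2: "((\<lambda>z. Q z powr (-lam)) has_real_derivative D) (at r)"
  proof -
    have "(Q has_real_derivative (2 * r - 2 * t)) (at r)"
      unfolding Q_def by (auto intro!: derivative_eq_intros)
    from DERIV_chain2[OF has_real_derivative_powr[OF Qpos[OF r], of "-lam"] this]
    show ?thesis unfolding D_def by (simp add: mult_ac)
  qed
  have DD: "(\<Sum>l. diffs C l * r^l) = D" using DERIV_unique[OF d1' d2] .
  have "(\<lambda>l. diffs C l * r^l) sums D"
    unfolding DD[symmetric] by (rule summable_sums, rule termdiff_converges[of _ 1]) (use r gs in \<open>auto simp: sums_iff\<close>)
  then have S0: "(\<lambda>l. r * (diffs C l * r^l)) sums (r * D)" by (rule sums_mult)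
  have E0: "r * (diffs C l * r^l) = real (Suc l) * C (Suc l) * r^(Suc l)" for l
    by (simp add: diffs_def mult_ac)
  have "(\<lambda>l. real (Suc l) * C (Suc l) * r^(Suc l)) sums (r * D)" using S0 unfolding E0 .
  then have h: "(\<lambda>l. real l * C l * r^l) sums (r * D)"
    using sums_Suc_iff[of "\<lambda>l. real l * C l * r^l" "r * D"] by simp
  have S1: "(\<lambda>l. C l * r^l + (1/lam) * (real l * C l * r^l)) sums (Q r powr (-lam) + (1/lam) * (r * D))"
    by (rule sums_add[OF gs[OF r] sums_mult[OF h]])
  have E1: "C l * r^l + (1/lam) * (real l * C l * r^l) = ((lam + l) / lam) * C l * r^l" for l
    using lam by (simp add: field_simps)
  have E2: "Q r powr (-lam) + (1/lam) * (r * D) = sphere_area n * poisson_kernel n r t"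
  proof -
    have "Q r powr (-lam) = Q r powr (1 + (-lam - 1))" by simp
    also have "\<dots> = Q r powr 1 * Q r powr (-lam - 1)" by (rule powr_add)
    also have "\<dots> = Q r * Q r powr (-lam - 1)" using Qpos[OF r] by simp
    finally have q: "Q r powr (-lam) = Q r * Q r powr (-lam - 1)" .
    have e: "(real n + 1) / 2 = lam + 1" by (simp add: lam_def field_simps)
    have "sphere_area n * poisson_kernel n r t = (1 - r^2) / Q r powr (lam + 1)"
      unfolding poisson_kernel_def e Q_def using sphere_area_pos[of n] by (simp add: mult_ac)
    also have "\<dots> = (1 - r^2) * Q r powr (- lam - 1)"
    proof -
      have m: "-lam-1 = -(lam+1)" by simp
      have "Q r powr (-lam-1) = Q r powr (-(lam+1))" unfolding m ..
      also have "\<dots> = inverse (Q r powr (lam+1))" by (rule powr_minus)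
      finally have "Q r powr (-lam-1) = inverse (Q r powr (lam+1))" .
      then show ?thesis by (simp only: divide_inverse)
    qed
    finally have sp: "sphere_area n * poisson_kernel n r t = (1 - r^2) * Q r powr (- lam - 1)" .
    have gen: "Q r * P + (1/lam) * (r * ((-lam) * P * (2 * r - 2 * t))) = (1 - r^2) * P" for P
    proof -
      have "(1/lam) * (r * ((-lam) * P * (2 * r - 2 * t))) = - (r * P * (2 * r - 2 * t))"
        using lam by (simp add: field_simps)
      then show ?thesis by (simp add: Q_def algebra_simps power2_eq_square)
    qed
    show ?thesis unfolding q D_def sp by (rule gen)
  qed
  have "(\<lambda>l. ((lam + l) / lam) * C l * r^l) sums (sphere_area n * poisson_kernel n r t)"
    using S1 unfolding E1 E2 .
  then show ?thesis unfolding C_def t_def .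
qed



lemma a_series:
  fixes n :: nat and \<theta> r lam :: real
  assumes lam_def: "lam = (real n - 1) / 2" and n: "n \<ge> 2" and r: "\<bar>r\<bar> < 1" and r0: "r \<noteq> 0"
  shows "(\<lambda>l. ((lam + Suc l) / lam) * gegenbauer (Suc l) lam (cos \<theta>) * r^l) sums
           ((sphere_area n * poisson_kernel n r (cos \<theta>) - 1) / r)"
proof -
  define c where "c l = ((lam + l) / lam) * gegenbauer l lam (cos \<theta>)" for l
  have lam: "lam > 0" using n by (simp add: lam_def)
  have c0: "c 0 = 1" using lam by (simp add: c_def gegenbauer_def)
  have "(\<lambda>l. c l * r^l) sums (sphere_area n * poisson_kernel n r (cos \<theta>))"
    using poisson_series[OF lam_def n r, of \<theta>] by (simp add: c_def)
  then have "(\<lambda>l. c (Suc l) * r^(Suc l)) sums (sphere_area n * poisson_kernel n r (cos \<theta>) - 1)"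
    using sums_Suc_iff[of "\<lambda>l. c l * r^l"] c0 by simp
  then have "(\<lambda>l. c (Suc l) * r^(Suc l) / r) sums ((sphere_area n * poisson_kernel n r (cos \<theta>) - 1) / r)"
    by (rule sums_divide)
  moreover have "c (Suc l) * r^(Suc l) / r = c (Suc l) * r^l" for l using r0 by simp
  ultimately show ?thesis by (simp add: c_def)
qed

lemma a_summable:
  fixes n :: nat and \<theta> r lam :: real
  assumes lam_def: "lam = (real n - 1) / 2" and n: "n \<ge> 2" and r: "\<bar>r\<bar> < 1"
  shows "summable (\<lambda>l. ((lam + Suc l) / lam) * gegenbauer (Suc l) lam (cos \<theta>) * r^l)"
proof (cases "r = 0")
  case True then show ?thesis using summable_zero_power'[of "\<lambda>l. ((lam + Suc l) / lam) * gegenbauer (Suc l) lam (cos \<theta>)"] by simp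
next
  case False then show ?thesis using a_series[OF lam_def n r False] by (simp add: sums_iff)
qed

lemma rad_div:
  fixes a :: "nat \<Rightarrow> real" and n :: nat
  assumes rad: "\<And>r. \<bar>r\<bar> < 1 \<Longrightarrow> summable (\<lambda>l. a l * r^l)" and n: "n \<ge> 1" and r: "\<bar>r\<bar> < 1"
  shows "summable (\<lambda>l. a l / (real n + l) * r^l)"
proof (rule summable_comparison_test')
  show "summable (\<lambda>l. \<bar>a l * r^l\<bar>)" by (rule powser_abs_summable[OF rad r])
  show "norm (a l / (real n + l) * r^l) \<le> \<bar>a l * r^l\<bar>" for l
  proof -
    have "norm (a l / (real n + l) * r^l) = \<bar>a l * r^l\<bar> / (real n + l)"
      using n by (simp add: abs_mult)
    also have "\<dots> \<le> \<bar>a l * r^l\<bar>" using n by (simp add: divide_le_eq mult_le_cancel_left1)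
    finally show ?thesis .
  qed
qed

lemma outer_antideriv:
  fixes a :: "nat \<Rightarrow> real" and n :: nat and x :: real
  assumes rad: "\<And>r. \<bar>r\<bar> < 1 \<Longrightarrow> summable (\<lambda>l. a l * r^l)" and n: "n \<ge> 2" and x: "\<bar>x\<bar> < 1"
  shows "((\<lambda>x. x^(n-1) * (\<Sum>l. a l / (real n + l) / (l+1) * x^(l+1))) has_real_derivative
           x^(n-2) * (\<Sum>l. a l / (l+1) * x^(l+1))) (at x)"
proof -
  define d where "d l = a l / (real n + l)" for l
  have radd: "summable (\<lambda>l. d l * r^l)" if r: "\<bar>r\<bar> < 1" for r
  proof (rule summable_comparison_test')
    show "summable (\<lambda>l. \<bar>a l * r^l\<bar>)" by (rule powser_abs_summable[OF rad r])
    show "norm (d l * r^l) \<le> \<bar>a l * r^l\<bar>" for l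
    proof -
      have "norm (d l * r^l) = \<bar>a l * r^l\<bar> / (real n + l)"
        using n by (simp add: d_def abs_mult)
      also have "\<dots> \<le> \<bar>a l * r^l\<bar>" using n by (simp add: divide_le_eq mult_le_cancel_left1)
      finally show ?thesis .
    qed
  qed
  define P where "P x = (\<Sum>l. d l / (l+1) * x^(l+1))" for x
  have dP: "(P has_real_derivative (\<Sum>l. d l * x^l)) (at x)"
    unfolding P_def by (rule powser_antideriv(2)[OF radd x])
  have S1: "(\<lambda>l. d l / (l+1) * x^(l+1)) sums P x"
    unfolding P_def by (rule summable_sums, rule powser_antideriv(1)[OF radd x])
  have S2: "(\<lambda>l. d l * x^l) sums (\<Sum>l. d l * x^l)"
    by (rule summable_sums, rule radd[OF x])
  have "(\<lambda>l. (real n - 1) * (d l / (l+1) * x^(l+1)) + x * (d l * x^l)) sums ((real n - 1) * P x + x * (\<Sum>l. d l * x^l))"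
    by (rule sums_add[OF sums_mult[OF S1] sums_mult[OF S2]])
  moreover have "(real n - 1) * (d l / (l+1) * x^(l+1)) + x * (d l * x^l) = a l / (l+1) * x^(l+1)" for l
  proof -
    have m: "real n + l > 0" using n by simp
    have "(real n - 1) * (d l / (l+1) * x^(l+1)) + x * (d l * x^l) = d l * x^(l+1) * ((real n - 1) / (l+1) + 1)"
      by (simp add: algebra_simps)
    also have "(real n - 1) / (l+1) + 1 = (real n + l) / (l+1)"
      by (simp add: field_simps)
    also have "d l * x^(l+1) * ((real n + l) / (l+1)) = (d l * (real n + l)) / (l+1) * x^(l+1)"
      by simp
    also have "d l * (real n + l) = a l" unfolding d_def using m by simp
    finally show ?thesis .
  qed
  ultimately have "(\<lambda>l. a l / (l+1) * x^(l+1)) sums ((real n - 1) * P x + x * (\<Sum>l. d l * x^l))" by simp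
  then have key: "(\<Sum>l. a l / (l+1) * x^(l+1)) = (real n - 1) * P x + x * (\<Sum>l. d l * x^l)"
    by (simp add: sums_iff)
  have "((\<lambda>x. x^(n-1) * P x) has_real_derivative (real (n-1) * x^(n-1-1)) * P x + x^(n-1) * (\<Sum>l. d l * x^l)) (at x)"
    using DERIV_mult[OF DERIV_pow[of "n-1" x] dP] by (simp add: mult_ac)
  moreover have "(real (n-1) * x^(n-1-1)) * P x + x^(n-1) * (\<Sum>l. d l * x^l) = x^(n-2) * (\<Sum>l. a l / (l+1) * x^(l+1))"
  proof -
    have "x^(n-1) = x^(n-2) * x" using n by (simp add: power_Suc2[symmetric] Suc_diff_Suc numeral_2_eq_2)
    moreover have "real (n-1) = real n - 1" using n by simp
    moreover have "n - 1 - 1 = n - 2" by simp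
    ultimately show ?thesis unfolding key by (simp add: algebra_simps)
  qed
  ultimately show ?thesis unfolding P_def d_def by simp
qed

theorem mainTheorem2:
  fixes n :: nat and \<theta> :: real
  assumes "n \<ge> 2" and "0 < \<theta>" and "\<theta> \<le> pi"
  shows "((\<lambda>s. \<Sum>l. s ^ (Suc l) * K_term n (Suc l) (cos \<theta>)) \<longlongrightarrow> K_kernel n (cos \<theta>)) (at_left 1)
     \<and> ((\<lambda>\<epsilon>. - integral {0..1 - \<epsilon>}
            (\<lambda>R. R ^ (n - 2) * integral {0..R}
               (\<lambda>r. (sphere_area n * poisson_kernel n r (cos \<theta>) - 1) / r)))
          \<longlongrightarrow> K_kernel n (cos \<theta>)) (at_right 0)"
proof -
  note n = assms(1)
  define lam where "lam = (real n - 1) / 2"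
  define t where "t = cos \<theta>"
  define a where "a l = ((lam + Suc l) / lam) * gegenbauer (Suc l) lam t" for l
  define f where "f r = (sphere_area n * poisson_kernel n r t - 1) / r" for r
  define A where "A x = (\<Sum>l. a l / (l+1) * x^(l+1))" for x
  define P where "P x = (\<Sum>l. a l / (real n + l) / (l+1) * x^(l+1))" for x
  define B where "B x = x^(n-1) * P x" for x
  define F where "F = (\<lambda>s. \<Sum>l. s ^ (Suc l) * K_term n (Suc l) t)"
  have lam: "lam > 0" using n by (simp add: lam_def)
  have t1: "t < 1" unfolding t_def using cos_monotone_0_pi[of 0 \<theta>] assms by simp
  have rad: "summable (\<lambda>l. a l * r^l)" if "\<bar>r\<bar> < 1" for r
    unfolding a_def t_def using a_summable[OF lam_def n that] .
  have fser: "(\<lambda>l. a l * r^l) sums f r" if "\<bar>r\<bar> < 1" "r \<noteq> 0" for r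
    unfolding a_def t_def f_def using a_series[OF lam_def n that] .
  have dA: "(A has_real_derivative (\<Sum>l. a l * x^l)) (at x)" if "\<bar>x\<bar> < 1" for x
    unfolding A_def by (rule powser_antideriv(2)[OF rad that])
  have dB: "(B has_real_derivative x^(n-2) * A x) (at x)" if "\<bar>x\<bar> < 1" for x
    unfolding A_def B_def P_def by (rule outer_antideriv[OF rad n that])
  have A0: "A 0 = 0" by (simp add: A_def)
  have B0: "B 0 = 0" using n by (simp add: B_def)
  have intf: "integral {0..R} f = A R" if R: "0 \<le> R" "R < 1" for R
  proof -
    have "(f has_integral (A R - A 0)) {0..R}"
    proof (rule fundamental_theorem_of_calculus_interior)
      show "0 \<le> R" by fact
      show "continuous_on {0..R} A"
        by (rule continuous_at_imp_continuous_on)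
           (use R in \<open>auto intro!: DERIV_isCont dA\<close>)
      show "(A has_vector_derivative f x) (at x)" if "x \<in> {0<..<R}" for x
      proof -
        have x: "\<bar>x\<bar> < 1" "x \<noteq> 0" using that R by auto
        have "(\<Sum>l. a l * x^l) = f x" using fser[OF x] by (simp add: sums_iff)
        then show ?thesis using dA[OF x(1)] by (simp add: has_real_derivative_iff_has_vector_derivative)
      qed
    qed
    then show ?thesis using A0 by (simp add: integral_unique)
  qed
  have intB: "integral {0..s} (\<lambda>R. R^(n-2) * integral {0..R} f) = B s" if s: "0 \<le> s" "s < 1" for s
  proof -
    have "((\<lambda>R. R^(n-2) * integral {0..R} f) has_integral (B s - B 0)) {0..s}"
    proof (rule fundamental_theorem_of_calculus_interior)
      show "0 \<le> s" by fact
      show "continuous_on {0..s} B"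
        by (rule continuous_at_imp_continuous_on)
           (use s in \<open>auto intro!: DERIV_isCont dB\<close>)
      show "(B has_vector_derivative x^(n-2) * integral {0..x} f) (at x)" if "x \<in> {0<..<s}" for x
      proof -
        have x: "\<bar>x\<bar> < 1" "0 \<le> x" "x < 1" using that s by auto
        show ?thesis using dB[OF x(1)] intf[OF x(2,3)] by (simp add: has_real_derivative_iff_has_vector_derivative)
      qed
    qed
    then show ?thesis using B0 by (simp add: integral_unique)
  qed
  have FP: "F s = - P s" if s: "\<bar>s\<bar> < 1" for s
  proof -
    have "s ^ (Suc l) * K_term n (Suc l) t = - (a l / (real n + l) / (l+1) * s^(l+1))" for l
    proof -
      have "real n + real (Suc l) - 1 = real n + l" by simp
      then show ?thesis unfolding K_term_def a_def Let_def lam_def[symmetric]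
        by (simp add: field_simps)
    qed
    then have "F s = (\<Sum>l. - (a l / (real n + l) / (l+1) * s^(l+1)))" unfolding F_def by simp
    also have "\<dots> = - P s" unfolding P_def
    proof (rule suminf_minus)
      have "summable (\<lambda>l. a l / (real n + l) * r^l)" if "\<bar>r\<bar> < 1" for r
        by (rule rad_div[OF rad]) (use n that in auto)
      from powser_antideriv(1)[OF this s]
      show "summable (\<lambda>l. a l / (real n + l) / (l+1) * s^(l+1))" .
    qed
    finally show ?thesis .
  qed
  define ft where "ft r = (if r = 0 then a 0 else f r)" for r
  define S where "S r = (\<Sum>l. a l * r^l)" for r
  have ftS: "ft r = S r" if "\<bar>r\<bar> < 1" for r
  proof (cases "r = 0")
    case True then show ?thesis by (simp add: ft_def S_def)
  next
    case False then show ?thesis using fser[OF that False] by (simp add: ft_def S_def sums_iff)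
  qed
  have contS: "isCont S x" if "\<bar>x\<bar> < 1" for x
  proof -
    have "(S has_real_derivative (\<Sum>l. diffs a l * x^l)) (at x)"
      unfolding S_def by (rule termdiffs_strong'[of 1]) (use rad that in auto)
    then show ?thesis by (rule DERIV_isCont)
  qed
  have contf1: "isCont f 1"
    unfolding f_def poisson_kernel_def by (intro continuous_intros) (use t1 in auto)
  have contft: "continuous_on {0..1} ft"
  proof (rule continuous_at_imp_continuous_on, intro ballI)
    fix x :: real assume x: "x \<in> {0..1}"
    show "isCont ft x"
    proof (cases "x < 1")
      case True
      have "eventually (\<lambda>y. y \<in> {-1<..<1}) (nhds x)"
        by (rule eventually_nhds_in_open) (use x True in auto)
      then have "eventually (\<lambda>y. ft y = S y) (nhds x)"
        by eventually_elim (auto intro: ftS)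
      then show ?thesis using contS[of x] x True by (subst isCont_cong) auto
    next
      case False
      then have x1: "x = 1" using x by auto
      have "eventually (\<lambda>y. y \<in> {0<..}) (nhds (1::real))"
        by (rule eventually_nhds_in_open) auto
      then have "eventually (\<lambda>y. ft y = f y) (nhds 1)"
        by eventually_elim (auto simp: ft_def)
      then show ?thesis using contf1 x1 by (subst isCont_cong) auto
    qed
  qed
  define gt where "gt R = integral {0..R} ft" for R
  have contgt: "continuous_on {0..1} gt"
    unfolding gt_def by (rule indefinite_integral_continuous_1, rule integrable_continuous_real, rule contft)
  have gt_eq: "integral {0..R} f = gt R" for R
    unfolding gt_def by (rule integral_spike[of "{0}"]) (auto simp: ft_def)
  define \<Phi> where "\<Phi> s = integral {0..s} (\<lambda>R. R^(n-2) * gt R)" for s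
  have cont\<Phi>: "continuous_on {0..1} \<Phi>"
    unfolding \<Phi>_def by (rule indefinite_integral_continuous_1, rule integrable_continuous_real)
       (intro continuous_intros contgt)
  have \<Phi>_eq: "integral {0..s} (\<lambda>R. R^(n-2) * integral {0..R} f) = \<Phi> s" for s
    unfolding \<Phi>_def gt_eq ..
  have lim_within: "(\<Phi> \<longlongrightarrow> \<Phi> 1) (at 1 within {0..1})"
    using cont\<Phi> unfolding continuous_on_def by auto
  have lim1: "(\<Phi> \<longlongrightarrow> \<Phi> 1) (at_left 1)"
  proof -
    have "filterlim (\<lambda>x. x) (at 1 within {0..1}) (at_left (1::real))"
    proof (rule filterlim_at_withinI)
      show "filterlim (\<lambda>x. x) (nhds 1) (at_left (1::real))" by (rule tendsto_ident_at)
      have "eventually (\<lambda>x. x \<in> {0<..<1}) (at_left (1::real))"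
        by (rule eventually_at_left_real) simp
      then show "eventually (\<lambda>x. x \<in> {0..1} - {1}) (at_left (1::real))"
        by eventually_elim auto
    qed
    from filterlim_compose[OF lim_within this] show ?thesis by simp
  qed
  have lim2: "((\<lambda>\<epsilon>. \<Phi> (1 - \<epsilon>)) \<longlongrightarrow> \<Phi> 1) (at_right 0)"
  proof -
    have "filterlim (\<lambda>\<epsilon>. 1 - \<epsilon>) (at 1 within {0..1}) (at_right (0::real))"
    proof (rule filterlim_at_withinI)
      have "((\<lambda>\<epsilon>. 1 - \<epsilon>) \<longlongrightarrow> 1 - 0) (at_right (0::real))"
        by (intro tendsto_intros)
      then show "filterlim (\<lambda>\<epsilon>. 1 - \<epsilon>) (nhds 1) (at_right (0::real))" by simp
      have "eventually (\<lambda>x. x \<in> {0<..<1}) (at_right (0::real))"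
        by (rule eventually_at_right_real) simp
      then show "eventually (\<lambda>x. 1 - x \<in> {0..1} - {1}) (at_right (0::real))"
        by eventually_elim auto
    qed
    from filterlim_compose[OF lim_within this] show ?thesis by simp
  qed
  have Feq: "F s = - \<Phi> s / s^(n-1)" if "s \<in> {0<..<1}" for s
  proof -
    have s: "0 \<le> s" "s < 1" "\<bar>s\<bar> < 1" "s \<noteq> 0" using that by auto
    have "\<Phi> s = s^(n-1) * P s" using intB[OF s(1,2)] \<Phi>_eq[of s] by (simp add: B_def)
    then show ?thesis using FP[OF s(3)] s(4) by simp
  qed
  have Flim: "(F \<longlongrightarrow> - \<Phi> 1) (at_left 1)"
  proof -
    have "((\<lambda>s. - \<Phi> s / s^(n-1)) \<longlongrightarrow> - \<Phi> 1 / 1^(n-1)) (at_left 1)"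
      by (intro tendsto_intros lim1) auto
    then have "((\<lambda>s. - \<Phi> s / s^(n-1)) \<longlongrightarrow> - \<Phi> 1) (at_left 1)" by simp
    moreover have "eventually (\<lambda>s. - \<Phi> s / s^(n-1) = F s) (at_left (1::real))"
    proof -
      have "eventually (\<lambda>x. x \<in> {0<..<1}) (at_left (1::real))"
        by (rule eventually_at_left_real) simp
      then show ?thesis by eventually_elim (simp add: Feq)
    qed
    ultimately show ?thesis by (blast intro: Lim_transform_eventually)
  qed
  have K: "K_kernel n t = - \<Phi> 1"
    unfolding K_kernel_def F_def[symmetric]
    by (rule tendsto_Lim[OF trivial_limit_at_left_real Flim])
  show ?thesis
  proof
    show "((\<lambda>s. \<Sum>l. s ^ (Suc l) * K_term n (Suc l) (cos \<theta>)) \<longlongrightarrow> K_kernel n (cos \<theta>)) (at_left 1)"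
      using Flim K unfolding F_def t_def by simp
    have "((\<lambda>\<epsilon>. - \<Phi> (1 - \<epsilon>)) \<longlongrightarrow> K_kernel n t) (at_right 0)"
      unfolding K by (intro tendsto_intros lim2)
    then show "((\<lambda>\<epsilon>. - integral {0..1 - \<epsilon>}
            (\<lambda>R. R ^ (n - 2) * integral {0..R}
               (\<lambda>r. (sphere_area n * poisson_kernel n r (cos \<theta>) - 1) / r)))
          \<longlongrightarrow> K_kernel n (cos \<theta>)) (at_right 0)"
      using \<Phi>_eq unfolding f_def t_def by simp
  qed
qed

end
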